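(* The problem Demand-Aware Direct Throughput can be solved in $O(n^3)$ time: given a doubly stochastic $n\times n$ matrix $\mathcal M$ and a number $\kappa\in[0,1]$, one can decide in $O(n^3)$ time (counting arithmetic operations and comparisons on the input numbers as unit cost) whether there exists a directed $(2n-1)$-regular multigraph $G$ on $[n]$ whose direct throughput with respect to $\mathcal M$ is at least $\kappa$.
   Context: Let $n\ge 1$ and $[n]=\{1,\dots,n\}$. Networks are finite directed multigraphs on vertex set $[n]$; self-loops and parallel arcs are allowed. A directed multigraph is directed $r$-regular if every vertex has exactly $r$ outgoing and exactly $r$ incoming arcs (a self-loop at $v$ counts as one outgoing and one incoming arc of $v$). An $n\times n$ matrix is doubly stochastic if all entries are nonnegative and every row and every column sums to $1$. In a directed $(2n-1)$-regular multigraph $G$ on $[n]$ every arc has capacity $\frac{1}{2n-1}$. $G$ directly hosts a nonnegative $n\times n$ matrix $\mathcal M=(a_{i,j})$ if $a_{u,v}\le \frac{m_{u,v}}{2n-1}$ for all $u,v\in[n]$, where $m_{u,v}$ is the number of arcs from $u$ to $v$ in $G$. The direct throughput of $G$ with respect to a doubly stochastic $\mathcal M$ is the largest $\theta$ such that $G$ directly hosts $\theta\mathcal M$. *)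

theory Defs
  imports Complex_Main
begin

text \<open>A directed multigraph on [n] = {1..n} is represented by its arc multiplicity
  function: mult u v is the number of arcs from u to v (self-loops u = v allowed,
  parallel arcs allowed). Values outside [n] are irrelevant.\<close>

definition directed_regular :: "nat \<Rightarrow> nat \<Rightarrow> (nat \<Rightarrow> nat \<Rightarrow> nat) \<Rightarrow> bool" where
  "directed_regular n r mult \<longleftrightarrow>
     (\<forall>u\<in>{1..n}. (\<Sum>v\<in>{1..n}. mult u v) = r \<and> (\<Sum>v\<in>{1..n}. mult v u) = r)"

definition doubly_stochastic :: "nat \<Rightarrow> (nat \<Rightarrow> nat \<Rightarrow> real) \<Rightarrow> bool" where
  "doubly_stochastic n A \<longleftrightarrow>
     (\<forall>i\<in>{1..n}. \<forall>j\<in>{1..n}. 0 \<le> A i j) \<and>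
     (\<forall>i\<in>{1..n}. (\<Sum>j\<in>{1..n}. A i j) = 1) \<and>
     (\<forall>j\<in>{1..n}. (\<Sum>i\<in>{1..n}. A i j) = 1)"

definition directly_hosts :: "nat \<Rightarrow> (nat \<Rightarrow> nat \<Rightarrow> nat) \<Rightarrow> (nat \<Rightarrow> nat \<Rightarrow> real) \<Rightarrow> bool" where
  "directly_hosts n mult A \<longleftrightarrow>
     (\<forall>u\<in>{1..n}. \<forall>v\<in>{1..n}. A u v \<le> real (mult u v) / real (2 * n - 1))"

definition direct_throughput :: "nat \<Rightarrow> (nat \<Rightarrow> nat \<Rightarrow> nat) \<Rightarrow> (nat \<Rightarrow> nat \<Rightarrow> real) \<Rightarrow> real" where
  "direct_throughput n mult M =
     Sup {\<theta>. 0 \<le> \<theta> \<and> directly_hosts n mult (\<lambda>u v. \<theta> * M u v)}"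

text \<open>Arithmetic operations and comparisons
  on reals cost one step each; constants are integers; indirect addressing is only
  allowed with a natural-number address (otherwise the machine is stuck forever).\<close>

datatype instr =
    LoadConst nat int
  | Add nat nat nat
  | Sub nat nat nat
  | Mul nat nat nat
  | Div nat nat nat
  | Load nat nat
  | Store nat nat
  | JumpLeq nat nat nat
  | Jump nat
  | Halt

type_synonym config = "nat \<times> (nat \<Rightarrow> real)"

fun exec_instr :: "instr \<Rightarrow> config \<Rightarrow> config" where
  "exec_instr (LoadConst d c) (pc, m) = (Suc pc, m(d := real_of_int c))"
| "exec_instr (Add d a b) (pc, m) = (Suc pc, m(d := m a + m b))"
| "exec_instr (Sub d a b) (pc, m) = (Suc pc, m(d := m a - m b))"
| "exec_instr (Mul d a b) (pc, m) = (Suc pc, m(d := m a * m b))"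
| "exec_instr (Div d a b) (pc, m) = (Suc pc, m(d := m a / m b))"
| "exec_instr (Load d a) (pc, m) =
     (if m a \<in> \<nat> then (Suc pc, m(d := m (nat \<lfloor>m a\<rfloor>))) else (pc, m))"
| "exec_instr (Store d a) (pc, m) =
     (if m d \<in> \<nat> then (Suc pc, m(nat \<lfloor>m d\<rfloor> := m a)) else (pc, m))"
| "exec_instr (JumpLeq a b l) (pc, m) = (if m a \<le> m b then (l, m) else (Suc pc, m))"
| "exec_instr (Jump l) (pc, m) = (l, m)"
| "exec_instr Halt (pc, m) = (pc, m)"

definition step :: "instr list \<Rightarrow> config \<Rightarrow> config" where
  "step p c = (if fst c < length p then exec_instr (p ! fst c) c else c)"

definition run :: "instr list \<Rightarrow> nat \<Rightarrow> config \<Rightarrow> config" where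
  "run p t c = (step p ^^ t) c"

definition halted :: "instr list \<Rightarrow> config \<Rightarrow> bool" where
  "halted p c \<longleftrightarrow> fst c < length p \<and> p ! fst c = Halt"

text \<open>Input encoding: cell 0 holds n, cell 1 holds kappa, the entry a_{i,j} (i,j in [n])
  is in cell 2 + (i-1)*n + (j-1); all other cells are 0. Output: cell 0 (1 = yes, 0 = no).\<close>
definition init_mem :: "nat \<Rightarrow> real \<Rightarrow> (nat \<Rightarrow> nat \<Rightarrow> real) \<Rightarrow> nat \<Rightarrow> real" where
  "init_mem n \<kappa> M k =
     (if k = 0 then real n
      else if k = 1 then \<kappa>
      else if k < 2 + n * n then M ((k - 2) div n + 1) ((k - 2) mod n + 1)
      else 0)"

end

theory Submission
  imports Defs
begin

lemma sum_lt_exists: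
  fixes f :: "'a \<Rightarrow> nat"
  assumes "finite I" "\<forall>i\<in>I. f i \<le> r" "sum f I < card I * r"
  shows "\<exists>i\<in>I. f i < r"
proof (rule ccontr)
  assume "\<not> ?thesis"
  then have "\<forall>i\<in>I. f i = r" using assms(2) by force
  then have "sum f I = card I * r" by simp
  then show False using assms(3) by simp
qed

lemma completion:
  fixes L :: "nat \<Rightarrow> nat \<Rightarrow> nat"
  assumes "finite I" "\<forall>u\<in>I. (\<Sum>v\<in>I. L u v) \<le> r" "\<forall>v\<in>I. (\<Sum>u\<in>I. L u v) \<le> r"
  shows "\<exists>m. (\<forall>u\<in>I. \<forall>v\<in>I. L u v \<le> m u v) \<and> (\<forall>u\<in>I. (\<Sum>v\<in>I. m u v) = r)
            \<and> (\<forall>v\<in>I. (\<Sum>u\<in>I. m u v) = r)"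
  using assms(2,3)
proof (induction "card I * r - (\<Sum>u\<in>I. \<Sum>v\<in>I. L u v)" arbitrary: L rule: less_induct)
  case (less L)
  define tot where "tot = (\<Sum>u\<in>I. \<Sum>v\<in>I. L u v)"
  have tot2: "tot = (\<Sum>v\<in>I. \<Sum>u\<in>I. L u v)" unfolding tot_def by (rule sum.swap)
  have totle: "tot \<le> card I * r"
  proof -
    have "tot \<le> (\<Sum>u\<in>I. r)" unfolding tot_def using less.prems(1) by (intro sum_mono) auto
    then show ?thesis by simp
  qed
  show ?case
  proof (cases "tot = card I * r")
    case True
    have rows: "\<forall>u\<in>I. (\<Sum>v\<in>I. L u v) = r"
    proof (rule ccontr)
      assume "\<not> ?thesis"
      then obtain u where u: "u \<in> I" "(\<Sum>v\<in>I. L u v) < r" using less.prems(1) by force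
      have "tot < (\<Sum>u\<in>I. r)" unfolding tot_def
        using less.prems(1) u assms(1) by (intro sum_strict_mono_ex1) auto
      then show False using True by simp
    qed
    have cols: "\<forall>v\<in>I. (\<Sum>u\<in>I. L u v) = r"
    proof (rule ccontr)
      assume "\<not> ?thesis"
      then obtain v where v: "v \<in> I" "(\<Sum>u\<in>I. L u v) < r" using less.prems(2) by force
      have "tot < (\<Sum>v\<in>I. r)" unfolding tot2
        using less.prems(2) v assms(1) by (intro sum_strict_mono_ex1) auto
      then show False using True by simp
    qed
    show ?thesis by (rule exI[of _ L]) (use rows cols in auto)
  next
    case False
    then have lt: "tot < card I * r" using totle by simp
    obtain u where u: "u \<in> I" "(\<Sum>v\<in>I. L u v) < r"
      using sum_lt_exists[OF assms(1), of "\<lambda>u. \<Sum>v\<in>I. L u v" r] less.prems(1) lt tot_def by auto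
    obtain v where v: "v \<in> I" "(\<Sum>u\<in>I. L u v) < r"
      using sum_lt_exists[OF assms(1), of "\<lambda>v. \<Sum>u\<in>I. L u v" r] less.prems(2) lt tot2 by auto
    define L' where "L' = (\<lambda>a b. if a = u \<and> b = v then Suc (L a b) else L a b)"
    have rowL': "(\<Sum>b\<in>I. L' a b) = (\<Sum>b\<in>I. L a b) + (if a = u then 1 else 0)" if "a \<in> I" for a
    proof -
      have "(\<Sum>b\<in>I. L' a b) = (\<Sum>b\<in>I. L a b + (if a = u \<and> b = v then 1 else 0))"
        unfolding L'_def by (intro sum.cong) auto
      also have "\<dots> = (\<Sum>b\<in>I. L a b) + (\<Sum>b\<in>I. (if a = u \<and> b = v then 1 else 0))"
        by (rule sum.distrib)
      also have "(\<Sum>b\<in>I. (if a = u \<and> b = v then 1 else 0)::nat) = (if a = u then 1 else 0)"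
        using v(1) assms(1) by (auto simp: sum.delta)
      finally show ?thesis .
    qed
    have colL': "(\<Sum>a\<in>I. L' a b) = (\<Sum>a\<in>I. L a b) + (if b = v then 1 else 0)" if "b \<in> I" for b
    proof -
      have "(\<Sum>a\<in>I. L' a b) = (\<Sum>a\<in>I. L a b + (if a = u \<and> b = v then 1 else 0))"
        unfolding L'_def by (intro sum.cong) auto
      also have "\<dots> = (\<Sum>a\<in>I. L a b) + (\<Sum>a\<in>I. (if a = u \<and> b = v then 1 else 0))"
        by (rule sum.distrib)
      also have "(\<Sum>a\<in>I. (if a = u \<and> b = v then 1 else 0)::nat) = (if b = v then 1 else 0)"
        using u(1) assms(1) by (auto simp: sum.delta')
      finally show ?thesis .
    qed
    have p1: "\<forall>a\<in>I. (\<Sum>b\<in>I. L' a b) \<le> r" using rowL' u less.prems(1) by auto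
    have p2: "\<forall>b\<in>I. (\<Sum>a\<in>I. L' a b) \<le> r" using colL' v less.prems(2) by auto
    have tot': "(\<Sum>a\<in>I. \<Sum>b\<in>I. L' a b) = tot + 1"
    proof -
      have "(\<Sum>a\<in>I. \<Sum>b\<in>I. L' a b) = (\<Sum>a\<in>I. (\<Sum>b\<in>I. L a b) + (if a = u then 1 else 0))"
        using rowL' by (intro sum.cong) auto
      also have "\<dots> = tot + (\<Sum>a\<in>I. (if a = u then 1 else 0))" unfolding tot_def by (rule sum.distrib)
      also have "(\<Sum>a\<in>I. (if a = u then 1 else 0)::nat) = 1" using u(1) assms(1) by (simp add: sum.delta')
      finally show ?thesis .
    qed
    have dec: "card I * r - (\<Sum>a\<in>I. \<Sum>b\<in>I. L' a b) < card I * r - (\<Sum>u\<in>I. \<Sum>v\<in>I. L u v)"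
      unfolding tot' using lt unfolding tot_def by linarith
    obtain m where m: "(\<forall>a\<in>I. \<forall>b\<in>I. L' a b \<le> m a b) \<and> (\<forall>a\<in>I. (\<Sum>b\<in>I. m a b) = r)
            \<and> (\<forall>b\<in>I. (\<Sum>a\<in>I. m a b) = r)"
      using less.hyps[OF dec p1 p2] by blast
    have "\<forall>a\<in>I. \<forall>b\<in>I. L a b \<le> m a b"
    proof (intro ballI)
      fix a b assume "a \<in> I" "b \<in> I"
      then have "L' a b \<le> m a b" using m by blast
      then show "L a b \<le> m a b" unfolding L'_def by (auto split: if_splits)
    qed
    then show ?thesis using m by blast
  qed
qed

definition cnt :: "real \<Rightarrow> nat \<Rightarrow> nat \<Rightarrow> nat" where
  "cnt x k T = card {j. k \<le> j \<and> j < T \<and> real j < x}"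

lemma cnt_le_iff:
  assumes "x \<le> real T"
  shows "cnt x 0 T \<le> m \<longleftrightarrow> x \<le> real m"
proof
  assume a: "cnt x 0 T \<le> m"
  show "x \<le> real m"
  proof (rule ccontr)
    assume "\<not> x \<le> real m"
    then have xm: "real m < x" by simp
    then have "m < T" using assms by linarith
    have "{0..m} \<subseteq> {j. 0 \<le> j \<and> j < T \<and> real j < x}"
      using xm \<open>m < T\<close> by auto
    then have "card {0..m} \<le> cnt x 0 T" unfolding cnt_def
      by (intro card_mono) auto
    then show False using a by simp
  qed
next
  assume a: "x \<le> real m"
  have "{j. 0 \<le> j \<and> j < T \<and> real j < x} \<subseteq> {..<m}" using a by auto
  then have "cnt x 0 T \<le> card {..<m}" unfolding cnt_def by (intro card_mono) auto
  then show "cnt x 0 T \<le> m" by simp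
qed

lemma cnt_le_T: "cnt x 0 T \<le> T"
proof -
  have "{j. 0 \<le> j \<and> j < T \<and> real j < x} \<subseteq> {..<T}" by auto
  then have "cnt x 0 T \<le> card {..<T}" unfolding cnt_def by (intro card_mono) auto
  then show ?thesis by simp
qed

lemma ds_le1:
  assumes "doubly_stochastic n M" "u \<in> {1..n}" "v \<in> {1..n}"
  shows "M u v \<le> 1" "0 \<le> M u v"
proof -
  have "M u v \<le> (\<Sum>j\<in>{1..n}. M u j)"
    using assms unfolding doubly_stochastic_def
    by (intro member_le_sum) auto
  then show "M u v \<le> 1" using assms unfolding doubly_stochastic_def by auto
  show "0 \<le> M u v" using assms unfolding doubly_stochastic_def by auto
qed

lemma throughput_iff:
  assumes ds: "doubly_stochastic n M" and n: "1 \<le> n" and k: "0 \<le> \<kappa>"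
  shows "\<kappa> \<le> direct_throughput n mult M \<longleftrightarrow>
         (\<forall>u\<in>{1..n}. \<forall>v\<in>{1..n}. \<kappa> * M u v \<le> real (mult u v) / real (2*n-1))"
proof -
  define S where "S = {\<theta>. 0 \<le> \<theta> \<and> directly_hosts n mult (\<lambda>u v. \<theta> * M u v)}"
  have dt: "direct_throughput n mult M = Sup S" unfolding direct_throughput_def S_def ..
  have Tpos: "0 < real (2*n-1)" using n by simp
  have "(\<Sum>j\<in>{1..n}. M 1 j) = 1" using ds n unfolding doubly_stochastic_def by auto
  then obtain v0 where v0: "v0 \<in> {1..n}" "M 1 v0 \<noteq> 0"
    by (metis (no_types, lifting) sum.neutral zero_neq_one)
  then have v0p: "0 < M 1 v0" using ds_le1(2)[OF ds, of 1 v0] n by auto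
  have bdd: "bdd_above S"
  proof (rule bdd_aboveI)
    fix \<theta> assume "\<theta> \<in> S"
    then have "\<theta> * M 1 v0 \<le> real (mult 1 v0) / real (2*n-1)"
      unfolding S_def directly_hosts_def using v0 n by auto
    then show "\<theta> \<le> real (mult 1 v0) / real (2*n-1) / M 1 v0"
      using pos_le_divide_eq[OF v0p] by blast
  qed
  have ne: "S \<noteq> {}"
  proof -
    have "0 \<in> S" unfolding S_def directly_hosts_def using Tpos by auto
    then show ?thesis by auto
  qed
  show ?thesis
  proof
    assume a: "\<kappa> \<le> direct_throughput n mult M"
    show "\<forall>u\<in>{1..n}. \<forall>v\<in>{1..n}. \<kappa> * M u v \<le> real (mult u v) / real (2*n-1)"
    proof (intro ballI)
      fix u v assume uv: "u \<in> {1..n}" "v \<in> {1..n}"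
      show "\<kappa> * M u v \<le> real (mult u v) / real (2*n-1)"
      proof (cases "M u v = 0")
        case True
        then show ?thesis using Tpos by simp
      next
        case False
        then have p: "0 < M u v" using ds_le1(2)[OF ds uv] by auto
        have "Sup S \<le> real (mult u v) / real (2*n-1) / M u v"
        proof (rule cSup_least[OF ne])
          fix \<theta> assume "\<theta> \<in> S"
          then have "\<theta> * M u v \<le> real (mult u v) / real (2*n-1)"
            unfolding S_def directly_hosts_def using uv by auto
          then show "\<theta> \<le> real (mult u v) / real (2*n-1) / M u v"
            using pos_le_divide_eq[OF p] by blast
        qed
        then have "\<kappa> \<le> real (mult u v) / real (2*n-1) / M u v" using a dt by (metis order_trans)
        then show ?thesis using pos_le_divide_eq[OF p] by blast
      qed
    qed
  next
    assume a: "\<forall>u\<in>{1..n}. \<forall>v\<in>{1..n}. \<kappa> * M u v \<le> real (mult u v) / real (2*n-1)"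
    have "\<kappa> \<in> S" unfolding S_def directly_hosts_def using a k by auto
    then show "\<kappa> \<le> direct_throughput n mult M" unfolding dt by (rule cSup_upper[OF _ bdd])
  qed
qed

definition Lc :: "nat \<Rightarrow> real \<Rightarrow> (nat \<Rightarrow> nat \<Rightarrow> real) \<Rightarrow> nat \<Rightarrow> nat \<Rightarrow> nat" where
  "Lc n \<kappa> M u v = cnt (M u v * (\<kappa> * real (2*n-1))) 0 (2*n-1)"

lemma characterization:
  assumes ds: "doubly_stochastic n M" and n: "1 \<le> n" and k: "0 \<le> \<kappa>" "\<kappa> \<le> 1"
  shows "(\<exists>mult. directed_regular n (2 * n - 1) mult \<and> \<kappa> \<le> direct_throughput n mult M) \<longleftrightarrow>
     ((\<forall>u\<in>{1..n}. (\<Sum>v\<in>{1..n}. Lc n \<kappa> M u v) \<le> 2*n-1) \<and>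
      (\<forall>v\<in>{1..n}. (\<Sum>u\<in>{1..n}. Lc n \<kappa> M u v) \<le> 2*n-1))"
proof -
  have Tpos: "0 < real (2*n-1)" using n by simp
  have key: "Lc n \<kappa> M u v \<le> m \<longleftrightarrow> \<kappa> * M u v \<le> real m / real (2*n-1)"
    if uv: "u \<in> {1..n}" "v \<in> {1..n}" for u v m
  proof -
    have "M u v * (\<kappa> * real (2*n-1)) \<le> 1 * (1 * real (2*n-1))"
      using ds_le1[OF ds uv] k Tpos by (intro mult_mono) auto
    then have "Lc n \<kappa> M u v \<le> m \<longleftrightarrow> M u v * (\<kappa> * real (2*n-1)) \<le> real m"
      unfolding Lc_def by (intro cnt_le_iff) simp
    also have "\<dots> \<longleftrightarrow> \<kappa> * M u v \<le> real m / real (2*n-1)"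
      using Tpos by (simp add: pos_le_divide_eq mult_ac)
    finally show ?thesis .
  qed
  show ?thesis
  proof
    assume "\<exists>mult. directed_regular n (2 * n - 1) mult \<and> \<kappa> \<le> direct_throughput n mult M"
    then obtain mult where reg: "directed_regular n (2 * n - 1) mult"
      and th: "\<kappa> \<le> direct_throughput n mult M" by blast
    have le: "Lc n \<kappa> M u v \<le> mult u v" if "u \<in> {1..n}" "v \<in> {1..n}" for u v
      using key[OF that] th throughput_iff[OF ds n k(1)] that by blast
    show "(\<forall>u\<in>{1..n}. (\<Sum>v\<in>{1..n}. Lc n \<kappa> M u v) \<le> 2*n-1) \<and>
      (\<forall>v\<in>{1..n}. (\<Sum>u\<in>{1..n}. Lc n \<kappa> M u v) \<le> 2*n-1)"
    proof (intro conjI ballI)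
      fix u assume u: "u \<in> {1..n}"
      have "(\<Sum>v\<in>{1..n}. Lc n \<kappa> M u v) \<le> (\<Sum>v\<in>{1..n}. mult u v)"
        using le u by (intro sum_mono) auto
      then show "(\<Sum>v\<in>{1..n}. Lc n \<kappa> M u v) \<le> 2*n-1" using reg u unfolding directed_regular_def by auto
    next
      fix v assume v: "v \<in> {1..n}"
      have "(\<Sum>u\<in>{1..n}. Lc n \<kappa> M u v) \<le> (\<Sum>u\<in>{1..n}. mult u v)"
        using le v by (intro sum_mono) auto
      then show "(\<Sum>u\<in>{1..n}. Lc n \<kappa> M u v) \<le> 2*n-1" using reg v unfolding directed_regular_def by auto
    qed
  next
    assume a: "(\<forall>u\<in>{1..n}. (\<Sum>v\<in>{1..n}. Lc n \<kappa> M u v) \<le> 2*n-1) \<and>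
      (\<forall>v\<in>{1..n}. (\<Sum>u\<in>{1..n}. Lc n \<kappa> M u v) \<le> 2*n-1)"
    obtain mult where m: "(\<forall>u\<in>{1..n}. \<forall>v\<in>{1..n}. Lc n \<kappa> M u v \<le> mult u v)"
      "(\<forall>u\<in>{1..n}. (\<Sum>v\<in>{1..n}. mult u v) = 2*n-1)"
      "(\<forall>v\<in>{1..n}. (\<Sum>u\<in>{1..n}. mult u v) = 2*n-1)"
      using completion[of "{1..n}" "Lc n \<kappa> M" "2*n-1"] a by auto
    have reg: "directed_regular n (2 * n - 1) mult" unfolding directed_regular_def using m by auto
    have "\<kappa> \<le> direct_throughput n mult M"
      using throughput_iff[OF ds n k(1)] key m(1) by blast
    then show "\<exists>mult. directed_regular n (2 * n - 1) mult \<and> \<kappa> \<le> direct_throughput n mult M"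
      using reg by blast
  qed
qed


definition prog :: "instr list" where
  "prog = [
    Store 0 1,
    LoadConst 1 1,
    JumpLeq 0 1 120,
    Mul 1 0 0,
    Add 1 1 1,
    Add 1 1 1,
    Add 1 1 1,
    Store 1 0,
    LoadConst 0 1,
    Add 1 1 0,
    Add 1 1 0,
    Store 1 2,
    Add 1 1 0,
    Store 1 3,
    Add 1 1 0,
    Store 1 4,
    Add 1 1 0,
    Store 1 5,
    Add 1 1 0,
    Store 1 6,
    Add 1 1 0,
    Store 1 7,
    Add 1 1 0,
    Store 1 8,
    Add 1 1 0,
    Store 1 9,
    Add 1 1 0,
    Store 1 10,
    Add 1 1 0,
    Store 1 11,
    Add 1 1 0,
    Store 1 12,
    Add 1 1 0,
    Store 1 13,
    Add 1 1 0,
    Store 1 14,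
    Add 1 1 0,
    Store 1 15,
    Add 1 1 0,
    Store 1 16,
    Add 1 1 0,
    Store 1 17,
    Add 1 1 0,
    Store 1 18,
    Add 1 1 0,
    Store 1 19,
    Add 1 1 0,
    Store 1 20,
    Add 1 1 0,
    Store 1 21,
    Add 1 1 0,
    Store 1 22,
    Add 1 1 0,
    Store 1 23,
    LoadConst 0 23,
    Sub 1 1 0,
    Load 2 1,
    LoadConst 3 1,
    LoadConst 4 24,
    Mul 5 2 2,
    Add 5 5 3,
    Add 5 5 3,
    JumpLeq 5 4 68,
    Load 6 4,
    Add 0 1 4,
    Store 0 6,
    Add 4 4 3,
    Jump 62,
    Add 7 2 2,
    Sub 7 7 3,
    Add 0 1 2,
    Load 9 0,
    LoadConst 13 0,
    LoadConst 4 2,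
    Add 5 2 3,
    Add 5 5 3,
    JumpLeq 5 4 82,
    Add 0 1 4,
    Load 6 0,
    Add 13 13 6,
    Add 4 4 3,
    Jump 76,
    Sub 6 3 13,
    Add 6 6 9,
    Add 0 1 2,
    Store 0 6,
    Mul 8 9 7,
    Add 19 1 3,
    Add 19 19 3,
    Mul 14 2 3,
    LoadConst 15 1,
    LoadConst 16 0,
    LoadConst 10 0,
    JumpLeq 2 10 115,
    LoadConst 13 0,
    LoadConst 11 0,
    JumpLeq 2 11 111,
    Mul 18 10 14,
    Mul 0 11 15,
    Add 18 18 0,
    Add 18 18 19,
    Load 17 18,
    Mul 17 17 8,
    LoadConst 12 0,
    JumpLeq 7 12 109,
    JumpLeq 17 12 107,
    Add 13 13 3,
    Add 12 12 3,
    Jump 104,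
    Add 11 11 3,
    Jump 96,
    JumpLeq 13 7 113,
    Jump 122,
    Add 10 10 3,
    Jump 93,
    JumpLeq 3 16 120,
    LoadConst 16 1,
    LoadConst 14 1,
    Mul 15 2 3,
    Jump 92,
    LoadConst 0 1,
    Halt,
    LoadConst 0 0,
    Halt]"

lemma prog_len: "length prog = 124" by (simp add: prog_def)

lemma prog_nth:
  "prog ! 0 = (Store 0 1)"
  "prog ! 1 = (LoadConst 1 1)"
  "prog ! 2 = (JumpLeq 0 1 120)"
  "prog ! 3 = (Mul 1 0 0)"
  "prog ! 4 = (Add 1 1 1)"
  "prog ! 5 = (Add 1 1 1)"
  "prog ! 6 = (Add 1 1 1)"
  "prog ! 7 = (Store 1 0)"
  "prog ! 8 = (LoadConst 0 1)"
  "prog ! 9 = (Add 1 1 0)"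
  "prog ! 10 = (Add 1 1 0)"
  "prog ! 11 = (Store 1 2)"
  "prog ! 12 = (Add 1 1 0)"
  "prog ! 13 = (Store 1 3)"
  "prog ! 14 = (Add 1 1 0)"
  "prog ! 15 = (Store 1 4)"
  "prog ! 16 = (Add 1 1 0)"
  "prog ! 17 = (Store 1 5)"
  "prog ! 18 = (Add 1 1 0)"
  "prog ! 19 = (Store 1 6)"
  "prog ! 20 = (Add 1 1 0)"
  "prog ! 21 = (Store 1 7)"
  "prog ! 22 = (Add 1 1 0)"
  "prog ! 23 = (Store 1 8)"
  "prog ! 24 = (Add 1 1 0)"
  "prog ! 25 = (Store 1 9)"
  "prog ! 26 = (Add 1 1 0)"
  "prog ! 27 = (Store 1 10)"
  "prog ! 28 = (Add 1 1 0)"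
  "prog ! 29 = (Store 1 11)"
  "prog ! 30 = (Add 1 1 0)"
  "prog ! 31 = (Store 1 12)"
  "prog ! 32 = (Add 1 1 0)"
  "prog ! 33 = (Store 1 13)"
  "prog ! 34 = (Add 1 1 0)"
  "prog ! 35 = (Store 1 14)"
  "prog ! 36 = (Add 1 1 0)"
  "prog ! 37 = (Store 1 15)"
  "prog ! 38 = (Add 1 1 0)"
  "prog ! 39 = (Store 1 16)"
  "prog ! 40 = (Add 1 1 0)"
  "prog ! 41 = (Store 1 17)"
  "prog ! 42 = (Add 1 1 0)"
  "prog ! 43 = (Store 1 18)"
  "prog ! 44 = (Add 1 1 0)"
  "prog ! 45 = (Store 1 19)"
  "prog ! 46 = (Add 1 1 0)"
  "prog ! 47 = (Store 1 20)"
  "prog ! 48 = (Add 1 1 0)"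
  "prog ! 49 = (Store 1 21)"
  "prog ! 50 = (Add 1 1 0)"
  "prog ! 51 = (Store 1 22)"
  "prog ! 52 = (Add 1 1 0)"
  "prog ! 53 = (Store 1 23)"
  "prog ! 54 = (LoadConst 0 23)"
  "prog ! 55 = (Sub 1 1 0)"
  "prog ! 56 = (Load 2 1)"
  "prog ! 57 = (LoadConst 3 1)"
  "prog ! 58 = (LoadConst 4 24)"
  "prog ! 59 = (Mul 5 2 2)"
  "prog ! 60 = (Add 5 5 3)"
  "prog ! 61 = (Add 5 5 3)"
  "prog ! 62 = (JumpLeq 5 4 68)"
  "prog ! 63 = (Load 6 4)"
  "prog ! 64 = (Add 0 1 4)"
  "prog ! 65 = (Store 0 6)"
  "prog ! 66 = (Add 4 4 3)"
  "prog ! 67 = (Jump 62)"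
  "prog ! 68 = (Add 7 2 2)"
  "prog ! 69 = (Sub 7 7 3)"
  "prog ! 70 = (Add 0 1 2)"
  "prog ! 71 = (Load 9 0)"
  "prog ! 72 = (LoadConst 13 0)"
  "prog ! 73 = (LoadConst 4 2)"
  "prog ! 74 = (Add 5 2 3)"
  "prog ! 75 = (Add 5 5 3)"
  "prog ! 76 = (JumpLeq 5 4 82)"
  "prog ! 77 = (Add 0 1 4)"
  "prog ! 78 = (Load 6 0)"
  "prog ! 79 = (Add 13 13 6)"
  "prog ! 80 = (Add 4 4 3)"
  "prog ! 81 = (Jump 76)"
  "prog ! 82 = (Sub 6 3 13)"
  "prog ! 83 = (Add 6 6 9)"
  "prog ! 84 = (Add 0 1 2)"
  "prog ! 85 = (Store 0 6)"
  "prog ! 86 = (Mul 8 9 7)"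
  "prog ! 87 = (Add 19 1 3)"
  "prog ! 88 = (Add 19 19 3)"
  "prog ! 89 = (Mul 14 2 3)"
  "prog ! 90 = (LoadConst 15 1)"
  "prog ! 91 = (LoadConst 16 0)"
  "prog ! 92 = (LoadConst 10 0)"
  "prog ! 93 = (JumpLeq 2 10 115)"
  "prog ! 94 = (LoadConst 13 0)"
  "prog ! 95 = (LoadConst 11 0)"
  "prog ! 96 = (JumpLeq 2 11 111)"
  "prog ! 97 = (Mul 18 10 14)"
  "prog ! 98 = (Mul 0 11 15)"
  "prog ! 99 = (Add 18 18 0)"
  "prog ! 100 = (Add 18 18 19)"
  "prog ! 101 = (Load 17 18)"
  "prog ! 102 = (Mul 17 17 8)"
  "prog ! 103 = (LoadConst 12 0)"
  "prog ! 104 = (JumpLeq 7 12 109)"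
  "prog ! 105 = (JumpLeq 17 12 107)"
  "prog ! 106 = (Add 13 13 3)"
  "prog ! 107 = (Add 12 12 3)"
  "prog ! 108 = (Jump 104)"
  "prog ! 109 = (Add 11 11 3)"
  "prog ! 110 = (Jump 96)"
  "prog ! 111 = (JumpLeq 13 7 113)"
  "prog ! 112 = (Jump 122)"
  "prog ! 113 = (Add 10 10 3)"
  "prog ! 114 = (Jump 93)"
  "prog ! 115 = (JumpLeq 3 16 120)"
  "prog ! 116 = (LoadConst 16 1)"
  "prog ! 117 = (LoadConst 14 1)"
  "prog ! 118 = (Mul 15 2 3)"
  "prog ! 119 = (Jump 92)"
  "prog ! 120 = (LoadConst 0 1)"
  "prog ! 121 = Halt"
  "prog ! 122 = (LoadConst 0 0)"
  "prog ! 123 = Halt"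
  by (simp_all add: prog_def)

lemma step_prog: "pc < 124 \<Longrightarrow> step prog (pc, m) = exec_instr (prog ! pc) (pc, m)"
  by (simp add: step_def prog_len)

definition reach :: "instr list \<Rightarrow> config \<Rightarrow> nat \<Rightarrow> (config \<Rightarrow> bool) \<Rightarrow> bool" where
  "reach p c T Q \<longleftrightarrow> (\<exists>t\<le>T. Q (run p t c))"

lemma run_0[simp]: "run p 0 c = c" by (simp add: run_def)
lemma run_Suc: "run p (Suc t) c = run p t (step p c)"
  unfolding run_def funpow_Suc_right by simp
lemma run_add: "run p (t1 + t2) c = run p t2 (run p t1 c)"
  by (metis add.commute comp_apply funpow_add run_def)

lemma reach_here: "Q c \<Longrightarrow> reach p c T Q"
  unfolding reach_def by (rule exI[of _ 0]) simp

lemma reach_step: "reach p (step p c) T Q \<Longrightarrow> reach p c (Suc T) Q"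
  unfolding reach_def by (metis Suc_le_mono run_Suc)

lemma reach_seq: "reach p c T1 (\<lambda>c'. reach p c' T2 Q) \<Longrightarrow> reach p c (T1 + T2) Q"
  unfolding reach_def by (metis add_mono run_add)

lemma reach_mono: "reach p c T Q \<Longrightarrow> T \<le> T' \<Longrightarrow> (\<And>c. Q c \<Longrightarrow> Q' c) \<Longrightarrow> reach p c T' Q'"
  unfolding reach_def by (meson order_trans)

lemma reach_exec: "pc < 124 \<Longrightarrow> reach prog (exec_instr (prog ! pc) (pc, m)) T Q \<Longrightarrow> reach prog (pc, m) (Suc T) Q"
  by (rule reach_step) (simp add: step_prog)

lemma load_ex: "m a = real k \<Longrightarrow> exec_instr (Load d a) (pc, m) = (Suc pc, m(d := m k))"
  by simp
lemma store_ex: "m d = real k \<Longrightarrow> exec_instr (Store d a) (pc, m) = (Suc pc, m(k := m a))"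
  by simp

lemma run_numeral: "run p (numeral k) c = run p (pred_numeral k) (step p c)"
  by (simp add: numeral_eq_Suc run_Suc)

lemma reach_run: "run p k c = c' \<Longrightarrow> reach p c' T Q \<Longrightarrow> reach p c (k + T) Q"
  unfolding reach_def by (metis add_le_cancel_left run_add)

lemma reach_run0: "run p k c = c' \<Longrightarrow> Q c' \<Longrightarrow> k \<le> T \<Longrightarrow> reach p c T Q"
  unfolding reach_def by blast

lemma reach_cont: "reach p c T1 P \<Longrightarrow> (\<And>c'. P c' \<Longrightarrow> reach p c' T2 Q) \<Longrightarrow> reach p c (T1+T2) Q"
  by (rule reach_seq) (erule reach_mono, auto)

lemma nat_add_Nats[simp]: "real x + real y \<in> \<nat>"
  by (metis of_nat_add of_nat_in_Nats)
lemma nat_floor_add[simp]: "nat \<lfloor>real x + real y\<rfloor> = x + y"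
  by (metis of_nat_add floor_of_nat nat_int)

lemma nat_int_add2[simp]: "nat (int x + int y) = x + y" by simp

lemma prog_nth_Suc0: "prog ! Suc 0 = LoadConst 1 1" by (simp add: prog_def)

lemma Suc0_one: "Suc (Suc 0) = 2" by simp

lemmas ex_simps = run_numeral run_Suc step_prog prog_nth prog_nth_Suc0


lemma loopB:
  assumes "L - a = d" "m 1 = real H" "m 3 = 1" "m 5 = real L" "m 4 = real a" "L \<le> H" "24 \<le> a" "32 \<le> H"
  shows "reach prog (62, m) (6*d+1) (\<lambda>c. fst c = 68 \<and>
     (\<forall>x. x \<notin> {0,4,6} \<and> (x < H + a \<or> H + L \<le> x) \<longrightarrow> snd c x = m x) \<and>
     (\<forall>j. a \<le> j \<and> j < L \<longrightarrow> snd c (H+j) = m j))"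
  using assms
proof (induction d arbitrary: a m)
  case 0
  then have r0: "run prog 1 (62, m) = (68, m)" by (simp add: ex_simps)
  show ?case using 0 by (intro reach_run0[OF r0]) auto
next
  case (Suc d)
  define m' where "m' = m(6 := m a, 0 := real H + real a, H + a := m a, 4 := real a + 1)"
  have r: "run prog 6 (62, m) = (62, m')" using Suc.prems unfolding m'_def by (simp add: ex_simps)
  have ih: "reach prog (62, m') (6*d+1) (\<lambda>c. fst c = 68 \<and>
     (\<forall>x. x \<notin> {0,4,6} \<and> (x < H + (a+1) \<or> H + L \<le> x) \<longrightarrow> snd c x = m' x) \<and>
     (\<forall>j. a + 1 \<le> j \<and> j < L \<longrightarrow> snd c (H+j) = m' j))"
    using Suc.prems by (intro Suc.IH) (auto simp: m'_def)
  show ?case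
  proof (rule reach_mono[OF reach_run[OF r ih]])
    show "6 + (6 * d + 1) \<le> 6 * Suc d + 1" by simp
  next
    fix c :: config
    assume h0: "fst c = 68 \<and>
     (\<forall>x. x \<notin> {0,4,6} \<and> (x < H + (a+1) \<or> H + L \<le> x) \<longrightarrow> snd c x = m' x) \<and>
     (\<forall>j. a + 1 \<le> j \<and> j < L \<longrightarrow> snd c (H+j) = m' j)"
    then have h: "\<forall>x. x \<notin> {0,4,6} \<and> (x < H + (a+1) \<or> H + L \<le> x) \<longrightarrow> snd c x = m' x"
      and h2: "\<forall>j. a + 1 \<le> j \<and> j < L \<longrightarrow> snd c (H+j) = m' j" by auto
    have A: "snd c x = m x" if "x \<notin> {0,4,6}" "x < H + a \<or> H + L \<le> x" for x
      using that h Suc.prems unfolding m'_def by auto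
    have B: "snd c (H+j) = m j" if j: "a \<le> j" "j < L" for j
    proof (cases "j = a")
      case True
      then show ?thesis using h Suc.prems unfolding m'_def by auto
    next
      case False
      then show ?thesis using h2 j Suc.prems unfolding m'_def by auto
    qed
    show "fst c = 68 \<and>
     (\<forall>x. x \<notin> {0,4,6} \<and> (x < H + a \<or> H + L \<le> x) \<longrightarrow> snd c x = m x) \<and>
     (\<forall>j. a \<le> j \<and> j < L \<longrightarrow> snd c (H+j) = m j)" using h0 A B by blast
  qed
qed


lemma cnt_stop: "T \<le> k \<Longrightarrow> cnt x k T = 0"
  unfolding cnt_def by simp

lemma cnt_step: "k < T \<Longrightarrow> cnt x k T = (if real k < x then 1 else 0) + cnt x (Suc k) T"
proof -
  assume k: "k < T"
  have e: "{j. k \<le> j \<and> j < T \<and> real j < x} =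
        (if real k < x then {k} else {}) \<union> {j. Suc k \<le> j \<and> j < T \<and> real j < x}"
    using k by (auto simp: le_less Suc_le_eq)
  have f: "finite {j. Suc k \<le> j \<and> j < T \<and> real j < x}" by simp
  show ?thesis unfolding cnt_def e using f by (auto simp: card_insert_if)
qed

lemma loopK:
  assumes "T - k = d" "m 7 = real T" "m 12 = real k" "m 13 = real s" "m 17 = x" "m 3 = 1"
  shows "reach prog (104, m) (5*d+1) (\<lambda>c. fst c = 109 \<and>
     (\<forall>y. y \<notin> {12,13} \<longrightarrow> snd c y = m y) \<and> snd c 13 = real (s + cnt x k T))"
  using assms
proof (induction d arbitrary: k s m)
  case 0
  then have r0: "run prog 1 (104, m) = (109, m)" by (simp add: ex_simps)
  show ?case using 0 by (intro reach_run0[OF r0]) (auto simp: cnt_stop)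
next
  case (Suc d)
  define s' where "s' = s + (if real k < x then 1 else 0)"
  define m' where "m' = m(13 := real s', 12 := real (Suc k))"
  have kT: "k < T" using Suc.prems by simp
  have r: "run prog (if real k < x then 5 else 4) (104, m) = (104, m')"
  proof (cases "real k < x")
    case True
    then show ?thesis using Suc.prems kT unfolding m'_def s'_def by (simp add: ex_simps add.commute)
  next
    case False
    then have "m' = m(12 := real (Suc k))" unfolding m'_def s'_def using Suc.prems
      by (auto simp: fun_eq_iff)
    then show ?thesis using Suc.prems kT False by (simp add: ex_simps add.commute)
  qed
  have ih: "reach prog (104, m') (5*d+1) (\<lambda>c. fst c = 109 \<and>
     (\<forall>y. y \<notin> {12,13} \<longrightarrow> snd c y = m' y) \<and> snd c 13 = real (s' + cnt x (Suc k) T))"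
    using Suc.prems by (intro Suc.IH) (auto simp: m'_def)
  show ?case
  proof (rule reach_mono[OF reach_run[OF r ih]])
    show "(if real k < x then 5 else 4) + (5 * d + 1) \<le> 5 * Suc d + 1" by simp
  next
    fix c :: config
    assume "fst c = 109 \<and>
     (\<forall>y. y \<notin> {12,13} \<longrightarrow> snd c y = m' y) \<and> snd c 13 = real (s' + cnt x (Suc k) T)"
    then show "fst c = 109 \<and>
     (\<forall>y. y \<notin> {12,13} \<longrightarrow> snd c y = m y) \<and> snd c 13 = real (s + cnt x k T)"
      unfolding m'_def s'_def using cnt_step[OF kT, of x] by auto
  qed
qed


lemma loopV:
  assumes "n - v = d" "m 2 = real n" "m 11 = real v" "m 10 = real u" "m 14 = real s1" "m 15 = real s2"
    "m 19 = real B" "m 8 = c" "m 7 = real T" "m 3 = 1" "m 13 = real s" "24 \<le> B"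
  shows "reach prog (96, m) ((5*T+11)*d+1) (\<lambda>cf. fst cf = 111 \<and>
     (\<forall>y. y \<notin> {0,11,12,13,17,18} \<longrightarrow> snd cf y = m y) \<and>
     snd cf 13 = real (s + (\<Sum>w\<in>{v..<n}. cnt (m (B + u*s1 + w*s2) * c) 0 T)))"
  using assms
proof (induction d arbitrary: v s m)
  case 0
  then have r0: "run prog 1 (96, m) = (111, m)" by (simp add: ex_simps)
  show ?case using 0 by (intro reach_run0[OF r0]) auto
next
  case (Suc d)
  define a where "a = B + u*s1 + v*s2"
  define mA where "mA = m(0 := real (v*s2), 18 := real a)"
  have vn: "v < n" using Suc.prems by simp
  have rA: "run prog 5 (96, m) = (101, mA)"
    using Suc.prems vn unfolding mA_def a_def
    by (simp add: ex_simps) (auto simp: fun_eq_iff algebra_simps)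
  define x where "x = m a * c"
  define mB where "mB = mA(17 := x, 12 := 0)"
  have ld: "exec_instr (Load 17 18) (101, mA) = (102, mA(17 := mA a))"
  proof -
    have "mA 18 = real a" by (simp add: mA_def)
    from load_ex[of mA 18 a 17 101, OF this] show ?thesis by simp
  qed
  have a24: "24 \<le> a" using Suc.prems unfolding a_def by simp
  have mAa: "mA a = m a" using Suc.prems unfolding mA_def a_def by simp
  have rB: "run prog 3 (101, mA) = (104, mB)"
    using Suc.prems vn unfolding mB_def x_def
    using a24 by (simp add: ex_simps ld mAa) (simp add: mA_def)
  have rAB: "run prog 8 (96, m) = (104, mB)" using rA rB run_add[of prog 5 3] by simp
  have K: "reach prog (104, mB) (5*(T-0)+1) (\<lambda>c. fst c = 109 \<and>
     (\<forall>y. y \<notin> {12,13} \<longrightarrow> snd c y = mB y) \<and> snd c 13 = real (s + cnt x 0 T))"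
    by (rule loopK) (use Suc.prems in \<open>auto simp: mB_def mA_def\<close>)
  let ?Q = "\<lambda>cf. fst cf = 111 \<and>
     (\<forall>y. y \<notin> {0,11,12,13,17,18} \<longrightarrow> snd cf y = m y) \<and>
     snd cf 13 = real (s + (\<Sum>w\<in>{v..<n}. cnt (m (B + u*s1 + w*s2) * c) 0 T))"
  have main: "reach prog (104, mB) ((5*(T-0)+1) + (2 + ((5*T+11)*d+1))) ?Q"
  proof (rule reach_cont[OF K])
    fix cf :: config
    assume h: "fst cf = 109 \<and> (\<forall>y. y \<notin> {12,13} \<longrightarrow> snd cf y = mB y) \<and> snd cf 13 = real (s + cnt x 0 T)"
    obtain mK where cf: "cf = (109, mK)" using h by (cases cf) auto
    have fr: "\<forall>y. y \<notin> {12,13} \<longrightarrow> mK y = mB y" and k13: "mK 13 = real (s + cnt x 0 T)"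
      using h cf by auto
    define mC where "mC = mK(11 := real (Suc v))"
    have r2: "run prog 2 cf = (96, mC)" unfolding cf mC_def
      using fr Suc.prems by (simp add: ex_simps mB_def mA_def add.commute)
    have frC: "\<forall>y. y \<notin> {0,11,12,13,17,18} \<longrightarrow> mC y = m y"
      using fr unfolding mC_def mB_def mA_def by auto
    have ih: "reach prog (96, mC) ((5*T+11)*d+1) (\<lambda>cf. fst cf = 111 \<and>
       (\<forall>y. y \<notin> {0,11,12,13,17,18} \<longrightarrow> snd cf y = mC y) \<and>
       snd cf 13 = real ((s + cnt x 0 T) + (\<Sum>w\<in>{Suc v..<n}. cnt (mC (B + u*s1 + w*s2) * c) 0 T)))"
      by (rule Suc.IH) (use Suc.prems frC k13 in \<open>auto simp: mC_def\<close>)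
    have eqs: "mC (B + u*s1 + w*s2) = m (B + u*s1 + w*s2)" for w
      using frC Suc.prems by auto
    have sumeq: "(\<Sum>w\<in>{v..<n}. cnt (m (B + u*s1 + w*s2) * c) 0 T) =
        cnt x 0 T + (\<Sum>w\<in>{Suc v..<n}. cnt (m (B + u*s1 + w*s2) * c) 0 T)"
      using vn unfolding x_def a_def by (simp add: sum.atLeast_Suc_lessThan)
    show "reach prog cf (2 + ((5*T+11)*d+1)) ?Q"
    proof (rule reach_run[OF r2], rule reach_mono[OF ih order_refl])
      fix cg :: config
      assume "fst cg = 111 \<and>
       (\<forall>y. y \<notin> {0,11,12,13,17,18} \<longrightarrow> snd cg y = mC y) \<and>
       snd cg 13 = real ((s + cnt x 0 T) + (\<Sum>w\<in>{Suc v..<n}. cnt (mC (B + u*s1 + w*s2) * c) 0 T))"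
      then show "?Q cg" using frC unfolding eqs sumeq by auto
    qed
  qed
  show ?case
    by (rule reach_mono[OF reach_run[OF rAB main]]) (simp_all add: algebra_simps)
qed


definition rs :: "(nat \<Rightarrow> real) \<Rightarrow> nat \<Rightarrow> nat \<Rightarrow> nat \<Rightarrow> nat \<Rightarrow> real \<Rightarrow> nat \<Rightarrow> nat \<Rightarrow> nat" where
  "rs m n B s1 s2 c T u = (\<Sum>w\<in>{0..<n}. cnt (m (B + u*s1 + w*s2) * c) 0 T)"

lemma loopU:
  assumes "n - u = d" "m 2 = real n" "m 10 = real u" "m 14 = real s1" "m 15 = real s2"
    "m 19 = real B" "m 8 = c" "m 7 = real T" "m 3 = 1" "24 \<le> B"
  shows "reach prog (93, m) (((5*T+11)*n+7)*d+1) (\<lambda>cf.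
     if (\<forall>u'. u \<le> u' \<and> u' < n \<longrightarrow> rs m n B s1 s2 c T u' \<le> T)
     then fst cf = 115 \<and> (\<forall>y. y \<notin> {0,10,11,12,13,17,18} \<longrightarrow> snd cf y = m y)
     else halted prog cf \<and> snd cf 0 = 0)"
  using assms
proof (induction d arbitrary: u m)
  case 0
  then have r0: "run prog 1 (93, m) = (115, m)" by (simp add: ex_simps)
  show ?case using 0 by (intro reach_run0[OF r0]) auto
next
  case (Suc d)
  have un: "u < n" using Suc.prems by simp
  define mA where "mA = m(13 := 0, 11 := 0)"
  have rA: "run prog 3 (93, m) = (96, mA)"
    using Suc.prems un unfolding mA_def by (simp add: ex_simps)
  have V: "reach prog (96, mA) ((5*T+11)*(n-0)+1) (\<lambda>cf. fst cf = 111 \<and>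
     (\<forall>y. y \<notin> {0,11,12,13,17,18} \<longrightarrow> snd cf y = mA y) \<and>
     snd cf 13 = real (0 + (\<Sum>w\<in>{0..<n}. cnt (mA (B + u*s1 + w*s2) * c) 0 T)))"
    by (rule loopV) (use Suc.prems in \<open>auto simp: mA_def\<close>)
  have mAeq: "mA (B + u'*s1 + w*s2) = m (B + u'*s1 + w*s2)" for u' w
    using Suc.prems unfolding mA_def by auto
  let ?Q = "\<lambda>cf. if (\<forall>u'. u \<le> u' \<and> u' < n \<longrightarrow> rs m n B s1 s2 c T u' \<le> T)
     then fst cf = 115 \<and> (\<forall>y. y \<notin> {0,10,11,12,13,17,18} \<longrightarrow> snd cf y = m y)
     else halted prog cf \<and> snd cf 0 = 0"
  have main: "reach prog (96, mA) (((5*T+11)*(n-0)+1) + (3 + (((5*T+11)*n+7)*d+1))) ?Q"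
  proof (rule reach_cont[OF V])
    fix cf :: config
    assume h: "fst cf = 111 \<and>
     (\<forall>y. y \<notin> {0,11,12,13,17,18} \<longrightarrow> snd cf y = mA y) \<and>
     snd cf 13 = real (0 + (\<Sum>w\<in>{0..<n}. cnt (mA (B + u*s1 + w*s2) * c) 0 T))"
    obtain mV where cf: "cf = (111, mV)" using h by (cases cf) auto
    have fr: "\<forall>y. y \<notin> {0,11,12,13,17,18} \<longrightarrow> mV y = mA y" using h cf by auto
    have v13: "mV 13 = real (rs m n B s1 s2 c T u)" using h cf unfolding rs_def mAeq by auto
    show "reach prog cf (3 + (((5*T+11)*n+7)*d+1)) ?Q"
    proof (cases "rs m n B s1 s2 c T u \<le> T")
      case False
      have r3: "run prog 3 cf = (123, mV(0 := 0))"
        unfolding cf using fr v13 Suc.prems False by (simp add: ex_simps mA_def)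
      have "\<not> (\<forall>u'. u \<le> u' \<and> u' < n \<longrightarrow> rs m n B s1 s2 c T u' \<le> T)"
        using False un by auto
      then show ?thesis
        by (intro reach_run0[OF r3]) (simp_all add: halted_def prog_len prog_nth)
    next
      case True
      note rsT = True
      define mC where "mC = mV(10 := real (Suc u))"
      have r3: "run prog 3 cf = (93, mC)"
        unfolding cf mC_def using fr v13 Suc.prems True by (simp add: ex_simps mA_def add.commute)
      have frC: "\<forall>y. y \<notin> {0,10,11,12,13,17,18} \<longrightarrow> mC y = m y"
        using fr unfolding mC_def mA_def by auto
      have ih: "reach prog (93, mC) (((5*T+11)*n+7)*d+1) (\<lambda>cf.
         if (\<forall>u'. Suc u \<le> u' \<and> u' < n \<longrightarrow> rs mC n B s1 s2 c T u' \<le> T)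
         then fst cf = 115 \<and> (\<forall>y. y \<notin> {0,10,11,12,13,17,18} \<longrightarrow> snd cf y = mC y)
         else halted prog cf \<and> snd cf 0 = 0)"
        by (rule Suc.IH) (use Suc.prems frC in \<open>auto simp: mC_def\<close>)
      have rseq: "rs mC n B s1 s2 c T u' = rs m n B s1 s2 c T u'" for u'
        unfolding rs_def using frC Suc.prems by auto
      have iff: "(\<forall>u'. u \<le> u' \<and> u' < n \<longrightarrow> rs m n B s1 s2 c T u' \<le> T) \<longleftrightarrow>
                 (\<forall>u'. Suc u \<le> u' \<and> u' < n \<longrightarrow> rs m n B s1 s2 c T u' \<le> T)"
      proof (intro iffI allI impI)
        fix u' assume A: "\<forall>u'. u \<le> u' \<and> u' < n \<longrightarrow> rs m n B s1 s2 c T u' \<le> T"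
          and B: "Suc u \<le> u' \<and> u' < n"
        then show "rs m n B s1 s2 c T u' \<le> T" by auto
      next
        fix u' assume A: "\<forall>u'. Suc u \<le> u' \<and> u' < n \<longrightarrow> rs m n B s1 s2 c T u' \<le> T"
          and B: "u \<le> u' \<and> u' < n"
        show "rs m n B s1 s2 c T u' \<le> T"
        proof (cases "u' = u")
          case True
          then show ?thesis using rsT by simp
        next
          case False
          then have "Suc u \<le> u'" using B by auto
          then show ?thesis using A B by auto
        qed
      qed
      show ?thesis
      proof (rule reach_run[OF r3], rule reach_mono[OF ih order_refl])
        fix cg :: config
        assume "if (\<forall>u'. Suc u \<le> u' \<and> u' < n \<longrightarrow> rs mC n B s1 s2 c T u' \<le> T)
         then fst cg = 115 \<and> (\<forall>y. y \<notin> {0,10,11,12,13,17,18} \<longrightarrow> snd cg y = mC y)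
         else halted prog cg \<and> snd cg 0 = 0"
        then show "?Q cg" unfolding rseq iff using frC by (auto split: if_splits)
      qed
    qed
  qed
  show ?case
    by (rule reach_mono[OF reach_run[OF rA main]]) (simp_all add: algebra_simps)
qed


lemma pass_U:
  assumes "m 2 = real n" "m 14 = real s1" "m 15 = real s2"
    "m 19 = real B" "m 8 = c" "m 7 = real T" "m 3 = 1" "24 \<le> B"
  shows "reach prog (92, m) (1 + (((5*T+11)*n+7)*n+1)) (\<lambda>cf.
     if (\<forall>u'. u' < n \<longrightarrow> rs m n B s1 s2 c T u' \<le> T)
     then fst cf = 115 \<and> (\<forall>y. y \<notin> {0,10,11,12,13,17,18} \<longrightarrow> snd cf y = m y)
     else halted prog cf \<and> snd cf 0 = 0)"
proof -
  define mA where "mA = m(10 := 0)"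
  have r: "run prog 1 (92, m) = (93, mA)" unfolding mA_def by (simp add: ex_simps)
  have U: "reach prog (93, mA) (((5*T+11)*n+7)*(n-0)+1) (\<lambda>cf.
     if (\<forall>u'. 0 \<le> u' \<and> u' < n \<longrightarrow> rs mA n B s1 s2 c T u' \<le> T)
     then fst cf = 115 \<and> (\<forall>y. y \<notin> {0,10,11,12,13,17,18} \<longrightarrow> snd cf y = mA y)
     else halted prog cf \<and> snd cf 0 = 0)"
    by (rule loopU) (use assms in \<open>auto simp: mA_def\<close>)
  have rseq: "rs mA n B s1 s2 c T u' = rs m n B s1 s2 c T u'" for u'
    unfolding rs_def mA_def using assms by auto
  show ?thesis
    apply (rule reach_run[OF r])
    apply (rule reach_mono[OF U])
     apply simp
    apply (unfold rseq)
    apply (auto simp: mA_def split: if_splits)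
    done
qed

lemma checks:
  assumes "m 2 = real n" "m 14 = real n" "m 15 = 1" "m 16 = 0"
    "m 19 = real B" "m 8 = c" "m 7 = real T" "m 3 = 1" "24 \<le> B"
  shows "reach prog (92, m) (2 * (1 + (((5*T+11)*n+7)*n+1)) + 7) (\<lambda>cf. halted prog cf \<and>
     snd cf 0 = (if (\<forall>u<n. rs m n B n 1 c T u \<le> T) \<and> (\<forall>u<n. rs m n B 1 n c T u \<le> T) then 1 else 0))"
proof -
  let ?P1 = "\<forall>u<n. rs m n B n 1 c T u \<le> T"
  let ?P2 = "\<forall>u<n. rs m n B 1 n c T u \<le> T"
  let ?Q = "\<lambda>cf. halted prog cf \<and> snd cf 0 = (if ?P1 \<and> ?P2 then 1 else 0)"
  have U1: "reach prog (92, m) (1 + (((5*T+11)*n+7)*n+1)) (\<lambda>cf.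
     if ?P1
     then fst cf = 115 \<and> (\<forall>y. y \<notin> {0,10,11,12,13,17,18} \<longrightarrow> snd cf y = m y)
     else halted prog cf \<and> snd cf 0 = 0)"
    using pass_U[of m n n 1 B c T] assms by simp
  have "reach prog (92, m) ((1 + (((5*T+11)*n+7)*n+1)) + (5 + ((1 + (((5*T+11)*n+7)*n+1)) + 2))) ?Q"
  proof (rule reach_cont[OF U1])
    fix cf :: config
    assume h: "if ?P1
     then fst cf = 115 \<and> (\<forall>y. y \<notin> {0,10,11,12,13,17,18} \<longrightarrow> snd cf y = m y)
     else halted prog cf \<and> snd cf 0 = 0"
    show "reach prog cf (5 + ((1 + (((5*T+11)*n+7)*n+1)) + 2)) ?Q"
    proof (cases ?P1)
      case False
      then show ?thesis using h by (intro reach_here) auto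
    next
      case True
      then obtain m1 where cf: "cf = (115, m1)" and fr1: "\<forall>y. y \<notin> {0,10,11,12,13,17,18} \<longrightarrow> m1 y = m y"
        using h by (cases cf) auto
      define m2 where "m2 = m1(16 := 1, 14 := 1, 15 := real n)"
      have r2: "run prog 5 cf = (92, m2)" unfolding cf m2_def using fr1 assms
        by (simp add: ex_simps)
      have fr2: "\<forall>y. y \<notin> {0,10,11,12,13,14,15,16,17,18} \<longrightarrow> m2 y = m y"
        using fr1 unfolding m2_def by auto
      have U2: "reach prog (92, m2) (1 + (((5*T+11)*n+7)*n+1)) (\<lambda>cf.
         if (\<forall>u'. u' < n \<longrightarrow> rs m2 n B 1 n c T u' \<le> T)
         then fst cf = 115 \<and> (\<forall>y. y \<notin> {0,10,11,12,13,17,18} \<longrightarrow> snd cf y = m2 y)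
         else halted prog cf \<and> snd cf 0 = 0)"
        by (rule pass_U) (use fr2 assms in \<open>auto simp: m2_def\<close>)
      have rseq: "rs m2 n B 1 n c T u' = rs m n B 1 n c T u'" for u'
        unfolding rs_def using fr2 assms by auto
      show ?thesis
      proof (rule reach_run[OF r2], rule reach_cont[OF U2])
        fix cg :: config
        assume h2: "if (\<forall>u'. u' < n \<longrightarrow> rs m2 n B 1 n c T u' \<le> T)
         then fst cg = 115 \<and> (\<forall>y. y \<notin> {0,10,11,12,13,17,18} \<longrightarrow> snd cg y = m2 y)
         else halted prog cg \<and> snd cg 0 = 0"
        show "reach prog cg 2 ?Q"
        proof (cases ?P2)
          case False
          then show ?thesis using h2 True unfolding rseq by (intro reach_here) auto
        next
          case True2: True
          then obtain m3 where cg: "cg = (115, m3)" and fr3: "\<forall>y. y \<notin> {0,10,11,12,13,17,18} \<longrightarrow> m3 y = m2 y"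
            using h2 unfolding rseq by (cases cg) auto
          have r3: "run prog 2 cg = (121, m3(0 := 1))" unfolding cg using fr3 fr1
            by (simp add: ex_simps m2_def assms)
          show ?thesis
            by (rule reach_run0[OF r3]) (use True True2 in \<open>simp_all add: halted_def prog_len prog_nth\<close>)
        qed
      qed
    qed
  qed
  then show ?thesis by (rule reach_mono) simp_all
qed


definition SaveInv :: "nat \<Rightarrow> nat \<Rightarrow> (nat \<Rightarrow> real) \<Rightarrow> nat \<Rightarrow> (nat \<Rightarrow> real) \<Rightarrow> bool" where
  "SaveInv n H im i m \<longleftrightarrow> m 0 = 1 \<and> m 1 = real (H + i - 1) \<and> m H = real n \<and>
     (\<forall>j. 2 \<le> j \<and> j < H \<longrightarrow> m j = im j) \<and> (\<forall>j. 2 \<le> j \<and> j < i \<longrightarrow> m (H + j) = im j)"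

lemma loopSave:
  assumes "24 - i = d" "2 \<le> i" "i \<le> 24" "SaveInv n H im i m" "32 \<le> H"
  shows "reach prog (6 + 2*i, m) (2*d) (\<lambda>c. fst c = 54 \<and> SaveInv n H im 24 (snd c))"
  using assms
proof (induction d arbitrary: i m)
  case 0
  then have "i = 24" by simp
  then show ?case using 0 by (intro reach_here) auto
next
  case (Suc d)
  have i24: "i < 24" using Suc.prems by simp
  define m1 where "m1 = m(1 := real (H + i))"
  have r1: "run prog 1 (6 + 2*i, m) = (7 + 2*i, m1)"
  proof -
    have "prog ! (6 + 2*i) = Add 1 1 0"
      using i24 Suc.prems(2) unfolding prog_def
      by (auto simp: less_Suc_eq numeral_eq_Suc) 
    then show ?thesis using Suc.prems(4) i24 Suc.prems(2) unfolding m1_def SaveInv_def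
      by (simp add: run_Suc step_prog add.commute)
  qed
  have st: "prog ! (7 + 2*i) = Store 1 i"
    using i24 Suc.prems(2) unfolding prog_def
    by (auto simp: less_Suc_eq numeral_eq_Suc)
  define m2 where "m2 = m1(H + i := m1 i)"
  have r2: "run prog 1 (7 + 2*i, m1) = (6 + 2*Suc i, m2)"
  proof -
    have "m1 1 = real (H + i)" unfolding m1_def by simp
    from store_ex[of m1 1 "H+i" i "7 + 2*i", OF this] show ?thesis
      using st i24 unfolding m2_def by (simp add: run_Suc step_prog)
  qed
  have inv: "SaveInv n H im (Suc i) m2"
    using Suc.prems(4,5) i24 Suc.prems(2) unfolding SaveInv_def m2_def m1_def
    by (auto simp: less_Suc_eq)
  have ih: "reach prog (6 + 2 * Suc i, m2) (2*d) (\<lambda>c. fst c = 54 \<and> SaveInv n H im 24 (snd c))"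
    by (rule Suc.IH) (use Suc.prems inv in auto)
  have "reach prog (6 + 2*i, m) (1 + (1 + 2*d)) (\<lambda>c. fst c = 54 \<and> SaveInv n H im 24 (snd c))"
    by (rule reach_run[OF r1], rule reach_run[OF r2 ih])
  then show ?case by simp
qed


lemma loopS:
  assumes "L - a = d" "m 1 = real H" "m 3 = 1" "m 5 = real L" "m 4 = real a" "m 13 = acc" "32 \<le> H"
  shows "reach prog (76, m) (6*d+1) (\<lambda>c. fst c = 82 \<and>
     (\<forall>y. y \<notin> {0,4,6,13} \<longrightarrow> snd c y = m y) \<and> snd c 13 = acc + (\<Sum>j\<in>{a..<L}. m (H+j)))"
  using assms
proof (induction d arbitrary: a m acc)
  case 0
  then have r0: "run prog 1 (76, m) = (82, m)" by (simp add: ex_simps)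
  show ?case using 0 by (intro reach_run0[OF r0]) auto
next
  case (Suc d)
  have aL: "a < L" using Suc.prems by simp
  define m' where "m' = m(0 := real H + real a, 6 := m (H+a), 13 := acc + m (H+a), 4 := real a + 1)"
  have r: "run prog 6 (76, m) = (76, m')" using Suc.prems aL unfolding m'_def by (simp add: ex_simps)
  have ih: "reach prog (76, m') (6*d+1) (\<lambda>c. fst c = 82 \<and>
     (\<forall>y. y \<notin> {0,4,6,13} \<longrightarrow> snd c y = m' y) \<and> snd c 13 = (acc + m (H+a)) + (\<Sum>j\<in>{Suc a..<L}. m' (H+j)))"
    by (rule Suc.IH) (use Suc.prems in \<open>auto simp: m'_def\<close>)
  have eq: "m' (H+j) = m (H+j)" for j using Suc.prems unfolding m'_def by auto
  have sumeq: "(\<Sum>j\<in>{a..<L}. m (H+j)) = m (H+a) + (\<Sum>j\<in>{Suc a..<L}. m (H+j))"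
    using aL by (simp add: sum.atLeast_Suc_lessThan)
  show ?case
  proof (rule reach_mono[OF reach_run[OF r ih]])
    show "6 + (6 * d + 1) \<le> 6 * Suc d + 1" by simp
  next
    fix c :: config
    assume h: "fst c = 82 \<and>
     (\<forall>y. y \<notin> {0,4,6,13} \<longrightarrow> snd c y = m' y) \<and> snd c 13 = (acc + m (H+a)) + (\<Sum>j\<in>{Suc a..<L}. m' (H+j))"
    then have h2: "snd c 13 = (acc + m (H+a)) + (\<Sum>j\<in>{Suc a..<L}. m (H+j))" by (simp only: eq)
    from h h2 show "fst c = 82 \<and>
     (\<forall>y. y \<notin> {0,4,6,13} \<longrightarrow> snd c y = m y) \<and> snd c 13 = acc + (\<Sum>j\<in>{a..<L}. m (H+j))"
      unfolding sumeq m'_def by auto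
  qed
qed


lemma init0[simp]: "init_mem n \<kappa> M 0 = real n" by (simp add: init_mem_def)
lemma init1[simp]: "init_mem n \<kappa> M 1 = \<kappa>" by (simp add: init_mem_def)
lemma init1'[simp]: "init_mem n \<kappa> M (Suc 0) = \<kappa>" by (simp add: init_mem_def)

lemma init_entry:
  assumes "u < n" "v < n"
  shows "init_mem n \<kappa> M (2 + u*n + v) = M (u+1) (v+1)"
proof -
  have "u*n + v < n*n"
  proof -
    have "u*n + v < u*n + n" using assms by simp
    also have "\<dots> = (u+1)*n" by simp
    also have "\<dots> \<le> n*n" using assms by (intro mult_right_mono) auto
    finally show ?thesis .
  qed
  moreover have "(u*n+v) div n = u" "(u*n+v) mod n = v" using assms by auto
  ultimately show ?thesis unfolding init_mem_def by simp
qed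

lemma row1_sum:
  assumes "doubly_stochastic n M" "1 \<le> n"
  shows "(\<Sum>j\<in>{2..<n+2}. init_mem n \<kappa> M j) = 1"
proof -
  have "(\<Sum>j\<in>{2..<n+2}. init_mem n \<kappa> M j) = (\<Sum>v\<in>{0..<n}. init_mem n \<kappa> M (v+2))"
  proof -
    have e: "\<And>a::nat. 2 \<le> a \<Longrightarrow> Suc (Suc (a - 2)) = a" by arith
    show ?thesis
      by (rule sum.reindex_bij_witness[where i="\<lambda>v. v + 2" and j="\<lambda>j. j - 2"]) (auto simp: e)
  qed
  also have "\<dots> = (\<Sum>v\<in>{0..<n}. M 1 (v+1))"
    using init_entry[of 0 n _ \<kappa> M] assms(2) by (intro sum.cong) (auto simp: add.commute)
  also have "\<dots> = (\<Sum>v\<in>{1..n}. M 1 v)"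
    by (rule sum.reindex_bij_witness[where i="\<lambda>v. v - 1" and j="\<lambda>v. v + 1"]) auto
  also have "\<dots> = 1" using assms unfolding doubly_stochastic_def by auto
  finally show ?thesis .
qed


lemma front1:
  fixes n :: nat and \<kappa> :: real and M :: "nat \<Rightarrow> nat \<Rightarrow> real"
  assumes n2: "2 \<le> n"
  defines "m0 \<equiv> init_mem n \<kappa> M" and "H \<equiv> 8*n*n" and "im \<equiv> (init_mem n \<kappa> M)(n := \<kappa>)"
  shows "reach prog (0, m0) 62 (\<lambda>c. fst c = 62 \<and> snd c 1 = real H \<and> snd c 2 = real n \<and> snd c 3 = 1 \<and>
     snd c 4 = 24 \<and> snd c 5 = real (n*n+2) \<and> (\<forall>j. 24 \<le> j \<and> j < H \<longrightarrow> snd c j = im j) \<and>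
     (\<forall>j. 2 \<le> j \<and> j < 24 \<longrightarrow> snd c (H+j) = im j))"
proof -
  have H32: "32 \<le> H" unfolding H_def using n2 mult_le_mono[OF n2 n2] by simp
  have nH: "n < H" unfolding H_def using n2 by (simp add: mult_le_mono)
  define mA where "mA = m0(n := \<kappa>, 1 := real H)"
  have rA: "run prog 7 (0, m0) = (7, mA)"
    using n2 unfolding mA_def m0_def H_def
    by (simp add: ex_simps Suc0_one) (auto simp: fun_eq_iff algebra_simps)
  define mB where "mB = mA(H := real n, 0 := 1, 1 := real (H+1))"
  have stA: "exec_instr (Store 1 0) (7, mA) = (8, mA(H := mA 0))"
    using store_ex[of mA 1 H 0 7] unfolding mA_def by simp
  have rB: "run prog 3 (7, mA) = (10, mB)"
    using n2 H32 unfolding mB_def by (simp add: ex_simps stA) (simp add: mA_def m0_def add.commute)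
  have sv: "SaveInv n H im 2 mB"
    unfolding SaveInv_def mB_def mA_def im_def m0_def using n2 H32 nH by auto
  have S: "reach prog (6 + 2*2, mB) (2*(24-2)) (\<lambda>c. fst c = 54 \<and> SaveInv n H im 24 (snd c))"
    by (rule loopSave) (use sv H32 in auto)
  let ?Q = "\<lambda>c. fst c = 62 \<and> snd c 1 = real H \<and> snd c 2 = real n \<and> snd c 3 = 1 \<and>
     snd c 4 = 24 \<and> snd c 5 = real (n*n+2) \<and> (\<forall>j. 24 \<le> j \<and> j < H \<longrightarrow> snd c j = im j) \<and>
     (\<forall>j. 2 \<le> j \<and> j < 24 \<longrightarrow> snd c (H+j) = im j)"
  have main: "reach prog (10, mB) (44 + 8) ?Q"
  proof (rule reach_cont[OF S[simplified]])
    fix c :: config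
    assume h: "fst c = 54 \<and> SaveInv n H im 24 (snd c)"
    obtain mS where c: "c = (54, mS)" using h by (cases c) auto
    have inv: "SaveInv n H im 24 mS" using h c by simp
    define mC where "mC = mS(0 := 23, 1 := real H)"
    have rC: "run prog 2 c = (56, mC)" unfolding c mC_def using inv unfolding SaveInv_def
      by (simp add: ex_simps)
    have ld: "exec_instr (Load 2 1) (56, mC) = (57, mC(2 := mC H))"
      using load_ex[of mC 1 H 2 56] unfolding mC_def by simp
    define mD where "mD = mC(2 := real n, 3 := 1, 4 := 24, 5 := real (n*n+2))"
    have mCH: "mC H = real n" using inv H32 unfolding mC_def SaveInv_def by simp
    have rD: "run prog 6 (56, mC) = (62, mD)" unfolding mD_def
      by (simp add: ex_simps ld mCH) (use inv H32 in \<open>auto simp: fun_eq_iff mC_def SaveInv_def\<close>)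
    have "?Q (62, mD)"
      using inv H32 unfolding mD_def mC_def SaveInv_def by auto
    then show "reach prog c 8 ?Q"
      using rC rD run_add[of prog 2 6 c] by (intro reach_run0[where k=8]) auto
  qed
  show ?thesis
    using reach_run[OF rA reach_run[OF rB main]] by (rule reach_mono) auto
qed


lemma sum_upd:
  fixes f :: "nat \<Rightarrow> real"
  assumes "finite A" "x \<in> A"
  shows "sum (f(x := y)) A = sum f A - f x + y"
proof -
  have "sum (f(x := y)) A = y + sum (f(x := y)) (A - {x})" using sum.remove[OF assms, of "f(x:=y)"] by simp
  also have "sum (f(x := y)) (A - {x}) = sum f (A - {x})" by (intro sum.cong) auto
  also have "sum f (A - {x}) = sum f A - f x" using sum.remove[OF assms, of f] by simp
  finally show ?thesis by simp
qed

lemma front2: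
  fixes n :: nat and \<kappa> :: real and M :: "nat \<Rightarrow> nat \<Rightarrow> real"
  assumes n2: "2 \<le> n" and ds: "doubly_stochastic n M"
    and H: "H = 8*n*n" and im: "im = (init_mem n \<kappa> M)(n := \<kappa>)"
    and pre: "m 1 = real H" "m 2 = real n" "m 3 = 1" "m 4 = 24" "m 5 = real (n*n+2)"
      "\<forall>j. 24 \<le> j \<and> j < H \<longrightarrow> m j = im j" "\<forall>j. 2 \<le> j \<and> j < 24 \<longrightarrow> m (H+j) = im j"
  shows "reach prog (62, m) ((6*(n*n+2-24)+1) + (8 + ((6*(n+2-2)+1) + 10))) (\<lambda>c. fst c = 92 \<and> snd c 2 = real n \<and> snd c 14 = real n \<and>
     snd c 15 = 1 \<and> snd c 16 = 0 \<and> snd c 19 = real (H+2) \<and> snd c 8 = \<kappa> * real (2*n-1) \<and>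
     snd c 7 = real (2*n-1) \<and> snd c 3 = 1 \<and>
     (\<forall>u v. u < n \<and> v < n \<longrightarrow> snd c (H + 2 + u*n + v) = M (u+1) (v+1)))"
proof -
  have H32: "32 \<le> H" unfolding H using n2 mult_le_mono[OF n2 n2] by simp
  have nnH: "n*n+2 \<le> H" unfolding H using n2 mult_le_mono[OF n2 n2] by simp
  have nH: "n + 2 \<le> n*n+2" using n2 by simp
  define L where "L = n*n+2"
  have Treal: "real (2*n-1) = 2 * real n - 1" using n2 by (simp add: of_nat_diff)
  let ?Q = "\<lambda>c. fst c = 92 \<and> snd c 2 = real n \<and> snd c 14 = real n \<and>
     snd c 15 = 1 \<and> snd c 16 = 0 \<and> snd c 19 = real (H+2) \<and> snd c 8 = \<kappa> * real (2*n-1) \<and>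
     snd c 7 = real (2*n-1) \<and> snd c 3 = 1 \<and>
     (\<forall>u v. u < n \<and> v < n \<longrightarrow> snd c (H + 2 + u*n + v) = M (u+1) (v+1))"
  have B: "reach prog (62, m) (6*(L-24)+1) (\<lambda>c. fst c = 68 \<and>
     (\<forall>x. x \<notin> {0,4,6} \<and> (x < H + 24 \<or> H + L \<le> x) \<longrightarrow> snd c x = m x) \<and>
     (\<forall>j. 24 \<le> j \<and> j < L \<longrightarrow> snd c (H+j) = m j))"
    by (rule loopB) (use pre H32 nnH in \<open>auto simp: L_def\<close>)
  have "reach prog (62, m) ((6*(L-24)+1) + (8 + ((6*(n+2-2)+1) + 10))) ?Q"
  proof (rule reach_cont[OF B])
    fix c :: config
    assume h: "fst c = 68 \<and>
     (\<forall>x. x \<notin> {0,4,6} \<and> (x < H + 24 \<or> H + L \<le> x) \<longrightarrow> snd c x = m x) \<and>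
     (\<forall>j. 24 \<le> j \<and> j < L \<longrightarrow> snd c (H+j) = m j)"
    obtain mE where c: "c = (68, mE)" using h by (cases c) auto
    have frE: "\<forall>x. x \<notin> {0,4,6} \<and> (x < H + 24 \<or> H + L \<le> x) \<longrightarrow> mE x = m x" using h c by auto
    have hi: "mE (H+j) = im j" if "2 \<le> j" "j < L" for j
    proof (cases "j < 24")
      case True
      then show ?thesis using frE pre that H32 by auto
    next
      case False
      then show ?thesis using h c pre that nnH unfolding L_def by auto
    qed
    have E1: "mE 1 = real H" "mE 2 = real n" "mE 3 = 1" using frE pre H32 by auto
    define mF1 where "mF1 = mE(7 := 2 * real n - 1, 0 := real (H + n))"
    have rF1: "run prog 3 c = (71, mF1)" unfolding c mF1_def using E1
      by (simp add: ex_simps; auto simp: fun_eq_iff)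
    have ld: "exec_instr (Load 9 0) (71, mF1) = (72, mF1(9 := mF1 (H+n)))"
      using load_ex[of mF1 0 "H+n" 9 71] unfolding mF1_def by simp
    have kap: "mF1 (H+n) = \<kappa>" using hi[of n] n2 nH H32 unfolding mF1_def L_def im by simp
    define mF2 where "mF2 = mF1(9 := \<kappa>, 13 := 0, 4 := 2, 5 := real (n+2))"
    have rF2: "run prog 5 (71, mF1) = (76, mF2)" unfolding mF2_def using E1
      by (simp add: ex_simps ld kap del: exec_instr.simps(6); auto simp: fun_eq_iff mF1_def)
    have S: "reach prog (76, mF2) (6*(n+2-2)+1) (\<lambda>c. fst c = 82 \<and>
       (\<forall>y. y \<notin> {0,4,6,13} \<longrightarrow> snd c y = mF2 y) \<and> snd c 13 = 0 + (\<Sum>j\<in>{2..<n+2}. mF2 (H+j)))"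
      by (rule loopS) (use E1 H32 in \<open>auto simp: mF2_def mF1_def\<close>)
    have R8: "run prog 8 c = (76, mF2)" using rF1 rF2 run_add[of prog 3 5 c] by simp
    have rest: "reach prog (76, mF2) ((6*(n+2-2)+1) + 10) ?Q"
    proof (rule reach_cont[OF S])
      fix cg :: config
      assume hg: "fst cg = 82 \<and>
       (\<forall>y. y \<notin> {0,4,6,13} \<longrightarrow> snd cg y = mF2 y) \<and> snd cg 13 = 0 + (\<Sum>j\<in>{2..<n+2}. mF2 (H+j))"
      obtain mG where cg: "cg = (82, mG)" using hg by (cases cg) auto
      have frG: "\<forall>y. y \<notin> {0,4,6,13} \<longrightarrow> mG y = mF2 y" using hg cg by auto
      define S where "S = (\<Sum>j\<in>{2..<n+2}. im j)"
      have F2hi: "mF2 (H+j) = im j" if "2 \<le> j" "j < L" for j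
        using hi[OF that] H32 unfolding mF2_def mF1_def by auto
      have G13: "mG 13 = S" using hg cg F2hi nH unfolding S_def L_def by auto
      have G: "mG 1 = real H" "mG 2 = real n" "mG 3 = 1" "mG 9 = \<kappa>" "mG 7 = 2 * real n - 1"
        using frG E1 unfolding mF2_def mF1_def by auto
      define mH where "mH = mG(6 := 1 - S + \<kappa>, 0 := real (H + n))"
      have rH: "run prog 3 cg = (85, mH)" unfolding cg mH_def using G G13
        by (simp add: ex_simps; auto simp: fun_eq_iff)
      have st: "exec_instr (Store 0 6) (85, mH) = (86, mH(H+n := mH 6))"
        using store_ex[of mH 0 "H+n" 6 85] unfolding mH_def by simp
      define mI where "mI = mH(H+n := 1 - S + \<kappa>, 8 := \<kappa> * (2 * real n - 1), 19 := real (H+2),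
          14 := real n, 15 := 1, 16 := 0)"
      have rI: "run prog 7 (85, mH) = (92, mI)" unfolding mI_def using G H32
        by (simp add: ex_simps st del: exec_instr.simps(7); auto simp: fun_eq_iff mH_def)
      have Sval: "1 - S + \<kappa> = init_mem n \<kappa> M n"
      proof -
        have "n \<in> {2..<n+2}" using n2 by simp
        then have "S = (\<Sum>j\<in>{2..<n+2}. init_mem n \<kappa> M j) - init_mem n \<kappa> M n + \<kappa>"
          unfolding S_def im by (intro sum_upd) auto
        moreover have "(\<Sum>j\<in>{2..<n+2}. init_mem n \<kappa> M j) = 1"
          by (rule row1_sum[OF ds]) (use n2 in simp)
        ultimately show ?thesis by linarith
      qed
      have final: "mI (H + 2 + u*n + v) = M (u+1) (v+1)" if uv: "u < n" "v < n" for u v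
      proof -
        have "u*n + v < n*n"
        proof -
          have "u*n + v < u*n + n" using uv by simp
          also have "\<dots> = (u+1)*n" by simp
          also have "\<dots> \<le> n*n" using uv by (intro mult_right_mono) auto
          finally show ?thesis .
        qed
        then have jL: "2 + u*n + v < L" unfolding L_def by simp
        have val: "mI (H + (2 + u*n + v)) = init_mem n \<kappa> M (2 + u*n + v)"
        proof (cases "2 + u*n + v = n")
          case True
          then show ?thesis using H32 Sval unfolding mI_def by auto
        next
          case False
          have "mI (H + (2 + u*n + v)) = mG (H + (2 + u*n + v))"
            using H32 False unfolding mI_def mH_def by auto
          also have "\<dots> = mF2 (H + (2 + u*n + v))" using frG H32 by auto
          also have "\<dots> = im (2 + u*n + v)" using F2hi[of "2 + u*n + v"] jL by linarith
          also have "\<dots> = init_mem n \<kappa> M (2 + u*n + v)" using False unfolding im by simp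
          finally show ?thesis .
        qed
        then show ?thesis using init_entry[OF uv, of \<kappa> M] by (simp add: add.assoc)
      qed
      have "?Q (92, mI)"
        using final G H32 Treal unfolding mI_def mH_def by auto
      then show "reach prog cg 10 ?Q"
        using rH rI run_add[of prog 3 7 cg] by (intro reach_run0[where k=10]) auto
    qed
    show "reach prog c (8 + ((6*(n+2-2)+1) + 10)) ?Q" by (rule reach_run[OF R8 rest])
  qed
  then show ?thesis unfolding L_def .
qed


lemma shift_sum: fixes f :: "nat \<Rightarrow> nat" shows "(\<Sum>w\<in>{0..<n}. f (w+1)) = (\<Sum>v\<in>{1..n}. (f v :: nat))"
  using sum.atLeast1_atMost_eq[of f n] by (simp add: atLeast0LessThan)

lemma bound_poly:
  fixes n :: nat
  assumes "1 \<le> n"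
  shows "62 + (((6*(n*n+2-24)+1) + (8 + ((6*(n+2-2)+1) + 10))) +
      (2 * (1 + (((5*(2*n-1)+11)*n+7)*n+1)) + 7)) \<le> 200 * n^3"
proof -
  have T: "5*(2*n-1)+11 \<le> 10*n+11" by arith
  have a1: "(5*(2*n-1)+11)*n \<le> (10*n+11)*n" using T by (rule mult_le_mono1)
  have a2: "((5*(2*n-1)+11)*n+7)*n \<le> ((10*n+11)*n+7)*n" using a1 by (intro mult_le_mono1) simp
  then have a: "((5*(2*n-1)+11)*n+7)*n+1 \<le> ((10*n+11)*n+7)*n+1" by simp
  have b: "6*(n*n+2-24) \<le> 6*(n*n)" "6*(n+2-2) = 6*n" by auto
  have c: "n^2 \<le> n^3" "n \<le> n^3" "1 \<le> n^3"
    using assms by (auto simp: power_increasing one_le_power)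
    (metis One_nat_def le_add1 power_increasing power_one_right assms numeral_3_eq_3 le_SucI le_refl)
  have e: "((10*n+11)*n+7)*n = 10*n^3 + 11*n^2 + 7*n" by (simp add: algebra_simps power2_eq_square power3_eq_cube)
  have f: "n*n = n^2" by (simp add: power2_eq_square)
  let ?X = "((5*(2*n-1)+11)*n+7)*n+1"
  let ?Y = "n*n+2-24"
  let ?Z = "n+2-2"
  have "62 + (((6*?Y+1) + (8 + ((6*?Z+1) + 10))) + (2 * (1 + ?X) + 7))
      \<le> 62 + (((6*(n*n)+1) + (8 + ((6*n+1) + 10))) + (2 * (1 + (10*n^3 + 11*n^2 + 7*n + 1)) + 7))"
    using a b e by (intro add_mono order_refl mult_le_mono) auto
  also have "\<dots> = 20*n^3 + 28*n^2 + 20*n + 93" using f by simp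
  also have "\<dots> \<le> 200 * n^3" using c by linarith
  finally show ?thesis .
qed


lemma quant_shift: fixes n :: nat shows "(\<forall>u<n. P (u+1)) \<longleftrightarrow> (\<forall>u\<in>{1..n}. P u)"
proof
  assume a: "\<forall>u<n. P (u+1)"
  show "\<forall>u\<in>{1..n}. P u"
  proof
    fix u assume u: "u \<in> {1..n}"
    then have "u - 1 < n" "u - 1 + 1 = u" by auto
    then show "P u" using a by metis
  qed
next
  assume "\<forall>u\<in>{1..n}. P u"
  then show "\<forall>u<n. P (u+1)" by auto
qed

lemma case_big:
  fixes n :: nat and \<kappa> :: real and M :: "nat \<Rightarrow> nat \<Rightarrow> real"
  assumes n2: "2 \<le> n" and ds: "doubly_stochastic n M"
  shows "reach prog (0, init_mem n \<kappa> M)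
     (62 + (((6*(n*n+2-24)+1) + (8 + ((6*(n+2-2)+1) + 10))) + (2 * (1 + (((5*(2*n-1)+11)*n+7)*n+1)) + 7)))
     (\<lambda>cf. halted prog cf \<and> snd cf 0 = (if (\<forall>u\<in>{1..n}. (\<Sum>v\<in>{1..n}. Lc n \<kappa> M u v) \<le> 2*n-1) \<and>
      (\<forall>v\<in>{1..n}. (\<Sum>u\<in>{1..n}. Lc n \<kappa> M u v) \<le> 2*n-1) then 1 else 0))"
  (is "reach _ _ _ ?Q")
proof -
  define H where "H = 8*n*n"
  define im where "im = (init_mem n \<kappa> M)(n := \<kappa>)"
  define T where "T = 2*n-1"
  define c where "c = \<kappa> * real (2*n-1)"
  have F1: "reach prog (0, init_mem n \<kappa> M) 62 (\<lambda>c. fst c = 62 \<and> snd c 1 = real H \<and> snd c 2 = real n \<and> snd c 3 = 1 \<and>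
     snd c 4 = 24 \<and> snd c 5 = real (n*n+2) \<and> (\<forall>j. 24 \<le> j \<and> j < H \<longrightarrow> snd c j = im j) \<and>
     (\<forall>j. 2 \<le> j \<and> j < 24 \<longrightarrow> snd c (H+j) = im j))"
    unfolding H_def im_def by (rule front1[OF n2])
  show ?thesis
  proof (rule reach_cont[OF F1])
    fix c1 :: config
    assume h1: "fst c1 = 62 \<and> snd c1 1 = real H \<and> snd c1 2 = real n \<and> snd c1 3 = 1 \<and>
     snd c1 4 = 24 \<and> snd c1 5 = real (n*n+2) \<and> (\<forall>j. 24 \<le> j \<and> j < H \<longrightarrow> snd c1 j = im j) \<and>
     (\<forall>j. 2 \<le> j \<and> j < 24 \<longrightarrow> snd c1 (H+j) = im j)"
    obtain m1 where c1: "c1 = (62, m1)" using h1 by (cases c1) auto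
    have F2: "reach prog (62, m1) ((6*(n*n+2-24)+1) + (8 + ((6*(n+2-2)+1) + 10))) (\<lambda>c. fst c = 92 \<and> snd c 2 = real n \<and> snd c 14 = real n \<and>
     snd c 15 = 1 \<and> snd c 16 = 0 \<and> snd c 19 = real (H+2) \<and> snd c 8 = \<kappa> * real (2*n-1) \<and>
     snd c 7 = real (2*n-1) \<and> snd c 3 = 1 \<and>
     (\<forall>u v. u < n \<and> v < n \<longrightarrow> snd c (H + 2 + u*n + v) = M (u+1) (v+1)))"
      by (rule front2[OF n2 ds H_def im_def]) (use h1 c1 in auto)
    show "reach prog c1 ((6*(n*n+2-24)+1) + (8 + ((6*(n+2-2)+1) + 10)) + (2 * (1 + (((5*(2*n-1)+11)*n+7)*n+1)) + 7)) ?Q"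
      unfolding c1
    proof (rule reach_cont[OF F2])
      fix c2 :: config
      assume h2: "fst c2 = 92 \<and> snd c2 2 = real n \<and> snd c2 14 = real n \<and>
       snd c2 15 = 1 \<and> snd c2 16 = 0 \<and> snd c2 19 = real (H+2) \<and> snd c2 8 = \<kappa> * real (2*n-1) \<and>
       snd c2 7 = real (2*n-1) \<and> snd c2 3 = 1 \<and>
       (\<forall>u v. u < n \<and> v < n \<longrightarrow> snd c2 (H + 2 + u*n + v) = M (u+1) (v+1))"
      obtain m2 where c2: "c2 = (92, m2)" using h2 by (cases c2) auto
      have H32: "24 \<le> H + 2" unfolding H_def using n2 mult_le_mono[OF n2 n2] by simp
      have CH: "reach prog (92, m2) (2 * (1 + (((5*T+11)*n+7)*n+1)) + 7) (\<lambda>cf. halted prog cf \<and>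
        snd cf 0 = (if (\<forall>u<n. rs m2 n (H+2) n 1 c T u \<le> T) \<and> (\<forall>u<n. rs m2 n (H+2) 1 n c T u \<le> T) then 1 else 0))"
        by (rule checks) (use h2 c2 H32 in \<open>auto simp: T_def c_def\<close>)
      have val: "m2 (H + 2 + u*n + v) = M (u+1) (v+1)" if "u < n" "v < n" for u v
        using h2 c2 that by auto
      have rs1: "rs m2 n (H+2) n 1 c T u = (\<Sum>v\<in>{1..n}. Lc n \<kappa> M (u+1) v)" if "u < n" for u
      proof -
        have "rs m2 n (H+2) n 1 c T u = (\<Sum>w\<in>{0..<n}. Lc n \<kappa> M (u+1) (w+1))"
          unfolding rs_def
        proof (rule sum.cong[OF refl])
          fix w assume "w \<in> {0..<n}"
          then have "m2 (H + 2 + u*n + w*1) = M (u+1) (w+1)" using val that by simp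
          then show "cnt (m2 (H + 2 + u*n + w*1) * c) 0 T = Lc n \<kappa> M (u+1) (w+1)"
            unfolding Lc_def c_def T_def by simp
        qed
        then show ?thesis using shift_sum[of "Lc n \<kappa> M (u+1)" n] by simp
      qed
      have rs2: "rs m2 n (H+2) 1 n c T u = (\<Sum>w\<in>{1..n}. Lc n \<kappa> M w (u+1))" if "u < n" for u
      proof -
        have "rs m2 n (H+2) 1 n c T u = (\<Sum>w\<in>{0..<n}. Lc n \<kappa> M (w+1) (u+1))"
          unfolding rs_def
        proof (rule sum.cong[OF refl])
          fix w assume "w \<in> {0..<n}"
          then have mv: "m2 (H + 2 + w*n + u) = M (w+1) (u+1)" using val that by simp
          have eq: "H + 2 + u*1 + w*n = H + 2 + w*n + u" by simp
          show "cnt (m2 (H + 2 + u*1 + w*n) * c) 0 T = Lc n \<kappa> M (w+1) (u+1)"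
            unfolding eq Lc_def c_def T_def mv by simp
        qed
        then show ?thesis using shift_sum[of "\<lambda>w. Lc n \<kappa> M w (u+1)" n] by simp
      qed
      have iff: "((\<forall>u<n. rs m2 n (H+2) n 1 c T u \<le> T) \<and> (\<forall>u<n. rs m2 n (H+2) 1 n c T u \<le> T)) \<longleftrightarrow>
        ((\<forall>u\<in>{1..n}. (\<Sum>v\<in>{1..n}. Lc n \<kappa> M u v) \<le> 2*n-1) \<and>
         (\<forall>v\<in>{1..n}. (\<Sum>u\<in>{1..n}. Lc n \<kappa> M u v) \<le> 2*n-1))"
        using quant_shift[of n "\<lambda>u. (\<Sum>v\<in>{1..n}. Lc n \<kappa> M u v) \<le> 2*n-1"]
          quant_shift[of n "\<lambda>v. (\<Sum>u\<in>{1..n}. Lc n \<kappa> M u v) \<le> 2*n-1"] rs1 rs2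
        unfolding T_def by auto
      show "reach prog c2 (2 * (1 + (((5*(2*n-1)+11)*n+7)*n+1)) + 7) ?Q"
        using CH unfolding c2 T_def[symmetric] iff .
    qed
  qed
qed


lemma case_one:
  fixes \<kappa> :: real and M :: "nat \<Rightarrow> nat \<Rightarrow> real"
  shows "halted prog (run prog 4 (0, init_mem 1 \<kappa> M)) \<and> snd (run prog 4 (0, init_mem 1 \<kappa> M)) 0 = 1"
  by (simp add: ex_simps Suc0_one halted_def prog_len)

theorem proposition5p1:
  shows "\<exists>(p :: instr list) (C :: real).
     \<forall>n \<ge> 1. \<forall>(M :: nat \<Rightarrow> nat \<Rightarrow> real) (\<kappa> :: real).
       doubly_stochastic n M \<and> 0 \<le> \<kappa> \<and> \<kappa> \<le> 1 \<longrightarrow>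
       (\<exists>t. real t \<le> C * real n ^ 3 \<and>
            halted p (run p t (0, init_mem n \<kappa> M)) \<and>
            snd (run p t (0, init_mem n \<kappa> M)) 0 =
              (if \<exists>mult. directed_regular n (2 * n - 1) mult \<and>
                          \<kappa> \<le> direct_throughput n mult M
               then 1 else 0))"
proof (rule exI[of _ prog], rule exI[of _ 200], intro allI impI)
  fix n :: nat and M :: "nat \<Rightarrow> nat \<Rightarrow> real" and \<kappa> :: real
  assume n1: "1 \<le> n" and h: "doubly_stochastic n M \<and> 0 \<le> \<kappa> \<and> \<kappa> \<le> 1"
  then have ds: "doubly_stochastic n M" and k0: "0 \<le> \<kappa>" and k1: "\<kappa> \<le> 1" by auto
  let ?A = "\<exists>mult. directed_regular n (2 * n - 1) mult \<and> \<kappa> \<le> direct_throughput n mult M"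
  have ch: "?A \<longleftrightarrow> ((\<forall>u\<in>{1..n}. (\<Sum>v\<in>{1..n}. Lc n \<kappa> M u v) \<le> 2*n-1) \<and>
      (\<forall>v\<in>{1..n}. (\<Sum>u\<in>{1..n}. Lc n \<kappa> M u v) \<le> 2*n-1))"
    by (rule characterization[OF ds n1 k0 k1])
  show "\<exists>t. real t \<le> 200 * real n ^ 3 \<and>
            halted prog (run prog t (0, init_mem n \<kappa> M)) \<and>
            snd (run prog t (0, init_mem n \<kappa> M)) 0 = (if ?A then 1 else 0)"
  proof (cases "n = 1")
    case True
    have A: ?A unfolding ch using True cnt_le_T unfolding Lc_def by auto
    show ?thesis
      by (rule exI[of _ 4]) (use case_one[of \<kappa> M] True A in simp)
  next
    case False
    then have n2: "2 \<le> n" using n1 by simp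
    from case_big[OF n2 ds, of \<kappa>] obtain t where
      t: "t \<le> 62 + (((6*(n*n+2-24)+1) + (8 + ((6*(n+2-2)+1) + 10))) + (2 * (1 + (((5*(2*n-1)+11)*n+7)*n+1)) + 7))"
      and q: "halted prog (run prog t (0, init_mem n \<kappa> M)) \<and> snd (run prog t (0, init_mem n \<kappa> M)) 0 =
        (if (\<forall>u\<in>{1..n}. (\<Sum>v\<in>{1..n}. Lc n \<kappa> M u v) \<le> 2*n-1) \<and>
      (\<forall>v\<in>{1..n}. (\<Sum>u\<in>{1..n}. Lc n \<kappa> M u v) \<le> 2*n-1) then 1 else 0)"
      unfolding reach_def by blast
    have "t \<le> 200 * n^3" using t bound_poly[OF n1] by linarith
    then have "real t \<le> real (200 * n^3)" by linarith
    then have tb: "real t \<le> 200 * real n ^ 3" by simp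
    have o: "snd (run prog t (0, init_mem n \<kappa> M)) 0 = (if ?A then 1 else 0)"
      using q ch by presburger
    show ?thesis using tb q o by blast
  qed
qed

end
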